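(* Let $V=\mathbb{C}^n$ be the defining representation of $GL_n(\mathbb{C})$ restricted to $T\rtimes S_n$, and $k_1,\dots,k_m\ge 0$. Then, as representations of $T\rtimes S_n$, $$\mathrm{Sym}^{k_1}(V)\otimes\dots\otimes\mathrm{Sym}^{k_m}(V)\cong\bigoplus_{P}\tilde{M}(\mathrm{Type}(P)),$$ the sum over all multiset partitions $P$ of the multiset $\{1^{k_1},2^{k_2},\dots,m^{k_m}\}$ with $|P|\le n$ parts.
   Context: Let $T\subset GL_n(\mathbb{C})$ be the diagonal torus, $S_n$ the permutation matrices, $T\rtimes S_n\cong\mathbb{C}^\times\wr S_n$ the monomial matrices. For a partition $\lambda$ of $r$ and integer $k$, $S^{\lambda,k}$ is the representation of $\mathbb{C}^\times\wr S_r$ on the Specht module $S^\lambda$ with each copy of $\mathbb{C}^\times$ acting by $z\mapsto z^k$. For a composition $\nu=(\nu_1,\dots,\nu_\ell)$ of $n$ and integers $\mathbf{w}$, $M(\nu,\mathbf{w}):=\mathrm{Ind}_{(\mathbb{C}^\times\wr S_{\nu_1})\times\dots\times(\mathbb{C}^\times\wr S_{\nu_\ell})}^{\mathbb{C}^\times\wr S_n}(S^{(\nu_1),w_1}\otimes\dots\otimes S^{(\nu_\ell),w_\ell})$ (block-diagonal subgroup). For partitions $\lambda^1,\dots,\lambda^j$, $\lambda^i=(\lambda^i_1,\dots,\lambda^i_{\ell_i})$, of total size $m'\le n$, $\tilde{M}(\lambda^1,\dots,\lambda^j):=M((n-m',\lambda^1_1,\dots,\lambda^1_{\ell_1},\dots,\lambda^j_1,\dots,\lambda^j_{\ell_j}),(0,1,\dots,1,\dots,j,\dots,j))$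 with $\ell_i$ entries equal to $i$ (the part $n-m'$ omitted if zero). A multiset partition of a multiset $M$ is a multiset of nonempty sub-multisets (parts) of $M$ whose multiplicities add up to those of $M$; $|P|$ is the number of parts. $\{1^{k_1},\dots,m^{k_m}\}$ is the multiset containing $i$ with multiplicity $k_i$. The type of $P$ is the sequence of partitions $\mathrm{Type}(P)=(\lambda^1,\lambda^2,\dots)$ where $\lambda^i$ is the partition whose parts are the multiplicities with which the distinct parts of size $i$ occur in $P$ (e.g. $P=\{\{1\},\{1\},\{2\}\}$ has $\lambda^1=(2,1)$ and all other $\lambda^i=\emptyset$). *)

theory Defs
  imports Complex_Main "HOL-Library.Multiset" "HOL-Combinatorics.Permutations"
begin

type_synonym cmat = "nat \<Rightarrow> nat \<Rightarrow> complex"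

text \<open>n x n complex matrices are functions nat => nat => complex that vanish outside
  the index range {0..<n}. Monomial matrices = T \<rtimes> S_n (exactly one nonzero
  entry in every row and every column).\<close>

definition monomial_mat :: "nat \<Rightarrow> cmat \<Rightarrow> bool" where
  "monomial_mat n g \<longleftrightarrow>
     (\<forall>i j. (n \<le> i \<or> n \<le> j) \<longrightarrow> g i j = 0) \<and>
     (\<forall>i<n. \<exists>!j. j < n \<and> g i j \<noteq> 0) \<and>
     (\<forall>j<n. \<exists>!i. i < n \<and> g i j \<noteq> 0)"

definition mmul :: "nat \<Rightarrow> cmat \<Rightarrow> cmat \<Rightarrow> cmat" where
  "mmul n g h = (\<lambda>i j. if i < n \<and> j < n then (\<Sum>k<n. g i k * h k j) else 0)"

text \<open>A representation is given by a subspace S of a function space 'a => complex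
  together with an action act g.\<close>

definition rep_iso ::
  "nat \<Rightarrow> ('a \<Rightarrow> complex) set \<times> (cmat \<Rightarrow> ('a \<Rightarrow> complex) \<Rightarrow> ('a \<Rightarrow> complex))
       \<Rightarrow> ('b \<Rightarrow> complex) set \<times> (cmat \<Rightarrow> ('b \<Rightarrow> complex) \<Rightarrow> ('b \<Rightarrow> complex)) \<Rightarrow> bool" where
  "rep_iso n R1 R2 \<longleftrightarrow>
     (\<exists>f. (\<forall>u\<in>fst R1. \<forall>v\<in>fst R1. f (\<lambda>x. u x + v x) = (\<lambda>y. f u y + f v y)) \<and>
          (\<forall>c. \<forall>u\<in>fst R1. f (\<lambda>x. c * u x) = (\<lambda>y. c * f u y)) \<and>
          bij_betw f (fst R1) (fst R2) \<and>
          (\<forall>g. monomial_mat n g \<longrightarrow> (\<forall>v\<in>fst R1. f (snd R1 g v) = snd R2 g (f v))))"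

definition dsum_space :: "'i set \<Rightarrow> ('i \<Rightarrow> ('a \<Rightarrow> complex) set) \<Rightarrow> ('i \<times> 'a \<Rightarrow> complex) set" where
  "dsum_space I S = {F. \<forall>i. (i \<notin> I \<longrightarrow> (\<lambda>x. F (i, x)) = (\<lambda>x. 0)) \<and>
                            (i \<in> I \<longrightarrow> (\<lambda>x. F (i, x)) \<in> S i)}"

definition dsum_act ::
  "('i \<Rightarrow> cmat \<Rightarrow> ('a \<Rightarrow> complex) \<Rightarrow> ('a \<Rightarrow> complex)) \<Rightarrow> cmat \<Rightarrow> ('i \<times> 'a \<Rightarrow> complex) \<Rightarrow> ('i \<times> 'a \<Rightarrow> complex)" where
  "dsum_act A g F = (\<lambda>(i, x). A i g (\<lambda>y. F (i, y)) x)"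

text \<open>V^{\<otimes>K}: tensors are coefficient functions on index lists of length K with
  entries < n.
  Sym^{k_1}(V) \<otimes> ... \<otimes> Sym^{k_m}(V) is realised (char 0) as the subspace of
  V^{\<otimes>(k_1+...+k_m)} of tensors symmetric within each block of k_j consecutive
  tensor positions.\<close>

definition tidx :: "nat \<Rightarrow> nat \<Rightarrow> nat list set" where
  "tidx n K = {is. length is = K \<and> set is \<subseteq> {..<n}}"

definition offs :: "nat list \<Rightarrow> nat \<Rightarrow> nat" where
  "offs ks j = sum_list (take j ks)"

definition block_perm :: "nat list \<Rightarrow> (nat \<Rightarrow> nat) \<Rightarrow> bool" where
  "block_perm ks p \<longleftrightarrow> p permutes {..<sum_list ks} \<and>
     (\<forall>j<length ks. p ` {offs ks j..<offs ks (Suc j)} = {offs ks j..<offs ks (Suc j)})"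

definition symtens_space :: "nat \<Rightarrow> nat list \<Rightarrow> (nat list \<Rightarrow> complex) set" where
  "symtens_space n ks =
     {T. (\<forall>is. is \<notin> tidx n (sum_list ks) \<longrightarrow> T is = 0) \<and>
         (\<forall>p. block_perm ks p \<longrightarrow>
            (\<forall>is\<in>tidx n (sum_list ks). T (map (\<lambda>a. is ! p a) [0..<sum_list ks]) = T is))}"

definition tens_act :: "nat \<Rightarrow> nat \<Rightarrow> cmat \<Rightarrow> (nat list \<Rightarrow> complex) \<Rightarrow> (nat list \<Rightarrow> complex)" where
  "tens_act n K g T = (\<lambda>is. if is \<in> tidx n K then
       (\<Sum>js\<in>tidx n K. (\<Prod>a<K. g (is ! a) (js ! a)) * T js) else 0)"

text \<open>A composition with weights is a list of pairs (\<nu>_k, w_k). Block k is the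
  index interval of length \<nu>_k starting at \<nu>_1 + ... + \<nu>_{k-1}.\<close>

definition cblock :: "(nat \<times> int) list \<Rightarrow> nat \<Rightarrow> nat set" where
  "cblock cs k = {sum_list (map fst (take k cs)) ..< sum_list (map fst (take (Suc k) cs))}"

text \<open>The block-diagonal subgroup (C^\<times> \<wr> S_{\<nu>_1}) \<times> ... \<times> (C^\<times> \<wr> S_{\<nu>_l}).\<close>

definition blockdiag :: "nat \<Rightarrow> (nat \<times> int) list \<Rightarrow> cmat \<Rightarrow> bool" where
  "blockdiag n cs h \<longleftrightarrow> monomial_mat n h \<and>
     (\<forall>i j. h i j \<noteq> 0 \<longrightarrow> (\<exists>k<length cs. i \<in> cblock cs k \<and> j \<in> cblock cs k))"

text \<open>The character S^{(\<nu>_1),w_1} \<otimes> ... \<otimes> S^{(\<nu>_l),w_l}: the Specht module S^{(r)}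
  of a one-row partition is the trivial one-dimensional representation of S_r,
  and each copy of C^\<times> (a nonzero entry of the monomial block) acts by z \<mapsto> z^w.\<close>

definition block_char :: "(nat \<times> int) list \<Rightarrow> cmat \<Rightarrow> complex" where
  "block_char cs h = (\<Prod>k<length cs.
      (\<Prod>i\<in>cblock cs k. \<Prod>j\<in>cblock cs k. if h i j = 0 then 1 else h i j) powi (snd (cs ! k)))"

text \<open>Ind_H^G \<chi> = {f : G \<rightarrow> C | f(h x) = \<chi>(h) f(x) for h \<in> H}, with (g f)(x) = f(x g).\<close>

definition ind_space :: "nat \<Rightarrow> (nat \<times> int) list \<Rightarrow> (cmat \<Rightarrow> complex) set" where
  "ind_space n cs = {f. (\<forall>x. \<not> monomial_mat n x \<longrightarrow> f x = 0) \<and>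
      (\<forall>h x. blockdiag n cs h \<and> monomial_mat n x \<longrightarrow> f (mmul n h x) = block_char cs h * f x)}"

definition ind_act :: "nat \<Rightarrow> cmat \<Rightarrow> (cmat \<Rightarrow> complex) \<Rightarrow> (cmat \<Rightarrow> complex)" where
  "ind_act n g f = (\<lambda>x. if monomial_mat n x then f (mmul n x g) else 0)"

text \<open>Partitions are represented as multisets of positive naturals (their parts).
  The composition of M-tilde(\<lambda>^1,...,\<lambda>^j): (n-m', parts of \<lambda>^1, ..., parts of \<lambda>^j)
  with weights (0, 1,...,1, ..., j,...,j); the part n-m' is omitted if zero;
  parts of each \<lambda>^i are listed in weakly decreasing order.\<close>

definition Mtilde_comp :: "nat \<Rightarrow> nat multiset list \<Rightarrow> (nat \<times> int) list" where
  "Mtilde_comp n lams =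
     (let m' = sum_list (map sum_mset lams) in
      (if n - m' = 0 then [] else [(n - m', 0)]) @
      concat (map (\<lambda>i. map (\<lambda>r. (r, int (Suc i))) (rev (sorted_list_of_multiset (lams ! i))))
                  [0..<length lams]))"

definition Mtilde_space :: "nat \<Rightarrow> nat multiset list \<Rightarrow> (cmat \<Rightarrow> complex) set" where
  "Mtilde_space n lams = ind_space n (Mtilde_comp n lams)"

definition multiset_partitions :: "'a multiset \<Rightarrow> 'a multiset multiset set" where
  "multiset_partitions M = {P. sum_mset P = M \<and> {#} \<notin># P}"

definition type_part :: "'a multiset multiset \<Rightarrow> nat \<Rightarrow> nat multiset" where
  "type_part P i = image_mset (count P) (mset_set {A \<in> set_mset P. size A = i})"

definition mtype :: "'a multiset multiset \<Rightarrow> nat multiset list" where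
  "mtype P = map (type_part P) [1..<Suc (Max (insert 0 (size ` set_mset P)))]"

definition target_mset :: "nat list \<Rightarrow> nat multiset" where
  "target_mset ks = (\<Sum>i<length ks. replicate_mset (ks ! i) (Suc i))"

end

theory Submission
  imports Defs
begin


section \<open>Monomial matrices\<close>

definition gp :: "nat \<Rightarrow> cmat \<Rightarrow> nat \<Rightarrow> nat" where
  "gp n g i = (if i < n then (THE j. j < n \<and> g i j \<noteq> 0) else i)"

definition gv :: "nat \<Rightarrow> cmat \<Rightarrow> nat \<Rightarrow> complex" where
  "gv n g i = g i (gp n g i)"

definition mk :: "nat \<Rightarrow> (nat \<Rightarrow> nat) \<Rightarrow> (nat \<Rightarrow> complex) \<Rightarrow> cmat" where
  "mk n s v = (\<lambda>i j. if i < n \<and> j = s i then v i else 0)"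

lemma gp_spec:
  assumes "monomial_mat n g" "i < n"
  shows "gp n g i < n \<and> g i (gp n g i) \<noteq> 0"
proof -
  from assms have "\<exists>!j. j < n \<and> g i j \<noteq> 0" unfolding monomial_mat_def by blast
  then have "(THE j. j < n \<and> g i j \<noteq> 0) < n \<and> g i (THE j. j < n \<and> g i j \<noteq> 0) \<noteq> 0"
    by (rule theI')
  then show ?thesis using assms(2) by (simp add: gp_def)
qed

lemma gp_nz_iff:
  assumes "monomial_mat n g"
  shows "g i j \<noteq> 0 \<longleftrightarrow> i < n \<and> j = gp n g i"
proof
  assume h: "g i j \<noteq> 0"
  then have ij: "i < n" "j < n" using assms unfolding monomial_mat_def by (meson not_le)+
  from assms ij have "\<exists>!j. j < n \<and> g i j \<noteq> 0" unfolding monomial_mat_def by blast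
  then show "i < n \<and> j = gp n g i" using gp_spec[OF assms ij(1)] h ij by blast
next
  assume "i < n \<and> j = gp n g i"
  then show "g i j \<noteq> 0" using gp_spec[OF assms] by blast
qed

lemma gp_permutes:
  assumes "monomial_mat n g"
  shows "gp n g permutes {..<n}"
proof (rule bij_imp_permutes)
  have inj: "inj_on (gp n g) {..<n}"
  proof (rule inj_onI)
    fix i i' assume "i \<in> {..<n}" "i' \<in> {..<n}" "gp n g i = gp n g i'"
    moreover have "\<exists>!k. k < n \<and> g k (gp n g i) \<noteq> 0"
      using assms gp_spec[OF assms] \<open>i \<in> {..<n}\<close> unfolding monomial_mat_def by auto
    ultimately show "i = i'" using gp_spec[OF assms] by (metis lessThan_iff)
  qed
  moreover have "gp n g ` {..<n} \<subseteq> {..<n}" using gp_spec[OF assms] by auto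
  ultimately show "bij_betw (gp n g) {..<n} {..<n}"
    by (simp add: bij_betw_def endo_inj_surj)
next
  fix x assume "x \<notin> {..<n}" then show "gp n g x = x" by (simp add: gp_def)
qed

lemma gv_nz: "monomial_mat n g \<Longrightarrow> i < n \<Longrightarrow> gv n g i \<noteq> 0"
  using gp_spec by (simp add: gv_def)

lemma mono_eq_mk:
  assumes "monomial_mat n g"
  shows "g = mk n (gp n g) (gv n g)"
proof (intro ext)
  fix i j show "g i j = mk n (gp n g) (gv n g) i j"
    using gp_nz_iff[OF assms, of i j] by (auto simp: mk_def gv_def)
qed

lemma mk_cong:
  assumes "\<And>i. i < n \<Longrightarrow> s i = s' i" "\<And>i. i < n \<Longrightarrow> v i = v' i"
  shows "mk n s v = mk n s' v'"
  using assms by (auto simp: mk_def fun_eq_iff)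

lemma mk_mono:
  assumes "s permutes {..<n}" "\<And>i. i < n \<Longrightarrow> v i \<noteq> 0"
  shows "monomial_mat n (mk n s v)" and "gp n (mk n s v) = s" and "\<And>i. i < n \<Longrightarrow> gv n (mk n s v) i = v i"
proof -
  have sl: "\<And>i. i < n \<Longrightarrow> s i < n" using permutes_in_image[OF assms(1)] by auto
  have sinv: "\<And>j. j < n \<Longrightarrow> inv s j < n \<and> s (inv s j) = j"
    using assms(1) by (metis lessThan_iff permutes_inverses(1) permutes_in_image permutes_inv)
  have sinj: "\<And>i i'. s i = s i' \<Longrightarrow> i = i'" using assms(1) by (metis permutes_inverses(2))
  show mm: "monomial_mat n (mk n s v)"
    unfolding monomial_mat_def mk_def
  proof (intro conjI allI impI)
    fix i j assume "n \<le> i \<or> n \<le> j" then show "(if i < n \<and> j = s i then v i else 0) = 0"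
      using sl by (auto simp: not_less[symmetric])
  next
    fix i assume "i < n" then show "\<exists>!j. j < n \<and> (if i < n \<and> j = s i then v i else 0) \<noteq> 0"
      using sl assms(2) by (intro ex1I[of _ "s i"]) (auto split: if_splits)
  next
    fix j assume "j < n" then show "\<exists>!i. i < n \<and> (if i < n \<and> j = s i then v i else 0) \<noteq> 0"
      using sinv sinj assms(2) by (intro ex1I[of _ "inv s j"]) (auto split: if_splits)
  qed
  show "gp n (mk n s v) = s"
  proof
    fix i show "gp n (mk n s v) i = s i"
    proof (cases "i < n")
      case True
      then show ?thesis using gp_spec[OF mm True] by (auto simp: mk_def split: if_splits)
    next
      case False
      then show ?thesis using assms(1) by (simp add: gp_def permutes_not_in)
    qed
  qed
  then show "\<And>i. i < n \<Longrightarrow> gv n (mk n s v) i = v i" by (simp add: gv_def mk_def)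
qed

lemma mmul_mk:
  assumes "s permutes {..<n}" "t permutes {..<n}"
  shows "mmul n (mk n s v) (mk n t u) = mk n (t \<circ> s) (\<lambda>i. v i * u (s i))"
proof (intro ext)
  fix i j
  have sl: "\<And>i. i < n \<Longrightarrow> s i < n" "\<And>i. i < n \<Longrightarrow> t i < n" using permutes_in_image[OF assms(1)] permutes_in_image[OF assms(2)] by auto
  show "mmul n (mk n s v) (mk n t u) i j = mk n (t \<circ> s) (\<lambda>i. v i * u (s i)) i j"
  proof (cases "i < n \<and> j < n")
    case True
    then have "(\<Sum>k<n. mk n s v i k * mk n t u k j) = (\<Sum>k<n. if k = s i then v i * mk n t u k j else 0)"
      by (intro sum.cong) (auto simp: mk_def)
    also have "\<dots> = v i * mk n t u (s i) j" using sl True by simp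
    finally show ?thesis using True sl by (auto simp: mmul_def mk_def)
  next
    case False
    then show ?thesis using sl by (auto simp: mmul_def mk_def)
  qed
qed

lemma mmul_mono:
  assumes "monomial_mat n x" "monomial_mat n g"
  shows "monomial_mat n (mmul n x g)" "gp n (mmul n x g) = gp n g \<circ> gp n x"
    "\<And>i. i < n \<Longrightarrow> gv n (mmul n x g) i = gv n x i * gv n g (gp n x i)"
proof -
  have e: "mmul n x g = mk n (gp n g \<circ> gp n x) (\<lambda>i. gv n x i * gv n g (gp n x i))"
    apply (subst mono_eq_mk[OF assms(1)], subst mono_eq_mk[OF assms(2)])
    by (rule mmul_mk[OF gp_permutes[OF assms(1)] gp_permutes[OF assms(2)]])
  have p: "gp n g \<circ> gp n x permutes {..<n}"
    by (simp add: gp_permutes assms permutes_compose)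
  have nz: "\<And>i. i < n \<Longrightarrow> gv n x i * gv n g (gp n x i) \<noteq> 0"
    using gv_nz assms gp_spec by auto
  show "monomial_mat n (mmul n x g)" "gp n (mmul n x g) = gp n g \<circ> gp n x"
    "\<And>i. i < n \<Longrightarrow> gv n (mmul n x g) i = gv n x i * gv n g (gp n x i)"
    unfolding e using mk_mono[OF p nz] by auto
qed




section \<open>Tensor action of monomial matrices\<close>

lemma tidx_map:
  assumes "js \<in> tidx n K" "s permutes {..<n}"
  shows "map s js \<in> tidx n K"
  using assms permutes_in_image[OF assms(2)] by (auto simp: tidx_def)

lemma tens_act_mono:
  assumes g: "monomial_mat n g" and js: "js \<in> tidx n K"
  shows "tens_act n K g T js = (\<Prod>a<K. gv n g (js ! a)) * T (map (gp n g) js)"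
proof -
  have lenjs: "length js = K" and sjs: "set js \<subseteq> {..<n}" using js by (auto simp: tidx_def)
  let ?ls = "map (gp n g) js"
  have ls: "?ls \<in> tidx n K" by (rule tidx_map[OF js gp_permutes[OF g]])
  have fin: "finite (tidx n K)"
  proof -
    have "tidx n K \<subseteq> {xs. set xs \<subseteq> {..<n} \<and> length xs = K}" by (auto simp: tidx_def)
    then show ?thesis using finite_lists_length_eq[of "{..<n}" K] finite_subset by blast
  qed
  have "(\<Sum>ls\<in>tidx n K. (\<Prod>a<K. g (js ! a) (ls ! a)) * T ls)
        = (\<Sum>ls\<in>tidx n K. if ls = ?ls then (\<Prod>a<K. g (js ! a) (ls ! a)) * T ls else 0)"
  proof (rule sum.cong[OF refl])
    fix ls assume lsin: "ls \<in> tidx n K"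
    show "(\<Prod>a<K. g (js ! a) (ls ! a)) * T ls = (if ls = ?ls then (\<Prod>a<K. g (js ! a) (ls ! a)) * T ls else 0)"
    proof (cases "ls = ?ls")
      case False
      have "length ls = K" using lsin by (simp add: tidx_def)
      then obtain a where a: "a < K" "ls ! a \<noteq> ?ls ! a" using False lenjs
        by (metis length_map nth_equalityI)
      then have "g (js ! a) (ls ! a) = 0" using gp_nz_iff[OF g] lenjs by auto
      then have "(\<Prod>a<K. g (js ! a) (ls ! a)) = 0" using a by (intro prod_zero) auto
      then show ?thesis by simp
    qed simp
  qed
  also have "\<dots> = (\<Prod>a<K. g (js ! a) (?ls ! a)) * T ?ls" using ls fin by simp
  also have "(\<Prod>a<K. g (js ! a) (?ls ! a)) = (\<Prod>a<K. gv n g (js ! a))"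
    using lenjs by (intro prod.cong) (auto simp: gv_def)
  finally show ?thesis using js by (simp add: tens_act_def)
qed

lemma tens_act_assoc:
  assumes x: "monomial_mat n x" and g: "monomial_mat n g" and js: "js \<in> tidx n K"
  shows "tens_act n K x (tens_act n K g T) js = tens_act n K (mmul n x g) T js"
proof -
  have lenjs: "length js = K" and sjs: "set js \<subseteq> {..<n}" using js by (auto simp: tidx_def)
  have js2: "map (gp n x) js \<in> tidx n K" by (rule tidx_map[OF js gp_permutes[OF x]])
  have "tens_act n K x (tens_act n K g T) js
     = (\<Prod>a<K. gv n x (js ! a)) * ((\<Prod>a<K. gv n g (map (gp n x) js ! a)) * T (map (gp n g) (map (gp n x) js)))"
    by (simp add: tens_act_mono[OF x js] tens_act_mono[OF g js2])
  also have "\<dots> = (\<Prod>a<K. gv n x (js ! a) * gv n g (gp n x (js ! a))) * T (map (gp n g \<circ> gp n x) js)"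
    using lenjs by (simp add: prod.distrib)
  also have "\<dots> = tens_act n K (mmul n x g) T js"
  proof -
    have "\<And>a. a < K \<Longrightarrow> js ! a < n" using lenjs sjs nth_mem by blast
    then show ?thesis by (subst tens_act_mono[OF mmul_mono(1)[OF x g] js])
      (auto simp: mmul_mono[OF x g] intro!: prod.cong)
  qed
  finally show ?thesis .
qed

lemma tens_act_add: "tens_act n K g (\<lambda>x. u x + v x) = (\<lambda>y. tens_act n K g u y + tens_act n K g v y)"
  by (auto simp: tens_act_def fun_eq_iff distrib_left sum.distrib)

lemma tens_act_scale: "tens_act n K g (\<lambda>x. c * u x) = (\<lambda>y. c * tens_act n K g u y)"
  by (auto simp: tens_act_def fun_eq_iff sum_distrib_left mult.left_commute)




section \<open>Interval partitions given by a list of lengths\<close>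

definition off :: "nat list \<Rightarrow> nat \<Rightarrow> nat" where
  "off l j = sum_list (take j l)"

lemma off_Suc: "off l (Suc j) = off l j + (if j < length l then l ! j else 0)"
  by (simp add: off_def take_Suc_conv_app_nth)

lemma off_mono: "j \<le> j' \<Longrightarrow> off l j \<le> off l j'"
proof (induction j' rule: dec_induct)
  case (step k) then show ?case by (simp add: off_Suc)
qed simp

lemma off_0[simp]: "off l 0 = 0" by (simp add: off_def)

lemma off_len: "length l \<le> j \<Longrightarrow> off l j = sum_list l" by (simp add: off_def)

definition col :: "nat list \<Rightarrow> nat \<Rightarrow> nat" where
  "col l a = (LEAST j. a < off l (Suc j))"

lemma col_spec:
  assumes "a < sum_list l"
  shows "col l a < length l" "off l (col l a) \<le> a" "a < off l (Suc (col l a))"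
proof -
  have ex: "a < off l (Suc (length l))" using assms by (simp add: off_len)
  show a3: "a < off l (Suc (col l a))" unfolding col_def by (rule LeastI[of _ "length l"]) (rule ex)
  show "off l (col l a) \<le> a"
  proof (cases "col l a")
    case (Suc j)
    then have "\<not> a < off l (Suc j)" using not_less_Least[of j "\<lambda>j. a < off l (Suc j)"]
      unfolding col_def by auto
    then show ?thesis using Suc by simp
  qed simp
  then show "col l a < length l" using a3 off_Suc[of l "col l a"] by (auto split: if_splits)
qed

lemma col_unique:
  assumes "off l j \<le> a" "a < off l (Suc j)"
  shows "col l a = j"
proof -
  have jl: "j < length l" using assms off_Suc[of l j] by (auto split: if_splits)
  have al: "a < sum_list l" using assms(2) off_mono[of "Suc j" "length l" l] jl off_len[of l "length l"] by auto
  note c = col_spec[OF al]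
  show ?thesis
  proof (rule ccontr)
    assume "col l a \<noteq> j"
    then consider "col l a < j" | "j < col l a" by linarith
    then show False
    proof cases
      case 1 then have "off l (Suc (col l a)) \<le> off l j" by (intro off_mono) auto
      then show False using c assms by linarith
    next
      case 2 then have "off l (Suc j) \<le> off l (col l a)" by (intro off_mono) auto
      then show False using c assms by linarith
    qed
  qed
qed

lemma sum_off: "sum f {..<off l k} = (\<Sum>k'<k. sum f {off l k'..<off l (Suc k')})"
proof (induction k)
  case (Suc k)
  have "{..<off l (Suc k)} = {..<off l k} \<union> {off l k..<off l (Suc k)}"
    using off_mono[of k "Suc k" l] by auto
  then have "sum f {..<off l (Suc k)} = sum f {..<off l k} + sum f {off l k..<off l (Suc k)}"
    by (simp add: sum.union_disjoint ivl_disj_int(2))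
  then show ?case using Suc by simp
qed simp

lemma prod_off: "prod f {..<off l k} = (\<Prod>k'<k. prod f {off l k'..<off l (Suc k')})"
proof (induction k)
  case (Suc k)
  have "{..<off l (Suc k)} = {..<off l k} \<union> {off l k..<off l (Suc k)}"
    using off_mono[of k "Suc k" l] by auto
  then have "prod f {..<off l (Suc k)} = prod f {..<off l k} * prod f {off l k..<off l (Suc k)}"
    by (simp add: prod.union_disjoint ivl_disj_int(2))
  then show ?case using Suc by simp
qed simp




section \<open>Blocks and labels\<close>

lemma offs_off: "offs ks = off ks" by (simp add: fun_eq_iff offs_def off_def)

definition blk :: "nat list \<Rightarrow> nat list \<Rightarrow> nat \<Rightarrow> nat list" where
  "blk ks js j = take (ks ! j) (drop (off ks j) js)"

lemma blk_map: "blk ks (map f js) j = map f (blk ks js j)"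
  by (simp add: blk_def take_map drop_map)

lemma length_blk: "length js = sum_list ks \<Longrightarrow> j < length ks \<Longrightarrow> length (blk ks js j) = ks ! j"
  using off_Suc[of ks j] off_mono[of "Suc j" "length ks" ks] off_len[of ks "length ks"]
  by (simp add: blk_def)

lemma blk_nth: "length js = sum_list ks \<Longrightarrow> j < length ks \<Longrightarrow> t < ks ! j \<Longrightarrow> blk ks js j ! t = js ! (off ks j + t)"
  using off_Suc[of ks j] off_mono[of "Suc j" "length ks" ks] off_len[of ks "length ks"]
  by (simp add: blk_def)

lemma blk_upt: "length js = sum_list ks \<Longrightarrow> j < length ks \<Longrightarrow> blk ks js j = map (nth js) [off ks j..<off ks (Suc j)]"
  by (rule nth_equalityI) (auto simp: length_blk blk_nth off_Suc)

lemma blk_Cons0: "blk (k # ks) js 0 = take k js" by (simp add: blk_def)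
lemma blk_ConsSuc: "blk (k # ks) js (Suc j) = blk ks (drop k js) j"
  by (simp add: blk_def off_def add.commute)

lemma concat_blk: "length js = sum_list ks \<Longrightarrow> concat (map (blk ks js) [0..<length ks]) = js"
proof (induction ks arbitrary: js)
  case (Cons k ks)
  have "concat (map (blk (k # ks) js) [0..<length (k # ks)])
      = take k js @ concat (map (blk ks (drop k js)) [0..<length ks])"
    by (simp add: upt_conv_Cons blk_Cons0 blk_ConsSuc map_Suc_upt[symmetric] o_def del: upt_Suc)
  also have "\<dots> = js" using Cons by simp
  finally show ?case .
qed simp

lemma blk_concat:
  assumes "length xs = length ks" "\<And>j. j < length ks \<Longrightarrow> length (xs ! j) = ks ! j" "j < length ks"
  shows "blk ks (concat xs) j = xs ! j"
  using assms
proof (induction ks arbitrary: xs j)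
  case (Cons k ks)
  then obtain x xs' where xs: "xs = x # xs'" by (cases xs) auto
  have lx: "length x = k" using Cons.prems(2)[of 0] xs by simp
  show ?case
  proof (cases j)
    case 0 then show ?thesis using xs lx by (simp add: blk_Cons0)
  next
    case (Suc j')
    have l': "\<And>j. j < length ks \<Longrightarrow> length (xs' ! j) = ks ! j"
      by (metis Cons.prems(2) Suc_less_eq length_Cons nth_Cons_Suc xs)
    have "blk (k # ks) (concat xs) j = blk ks (concat xs') j'" using xs lx Suc by (simp add: blk_ConsSuc)
    also have "\<dots> = xs' ! j'" using Cons.prems Suc xs l' by (intro Cons.IH) auto
    finally show ?thesis using xs Suc by simp
  qed
qed simp

definition lab :: "nat \<Rightarrow> nat list \<Rightarrow> nat list \<Rightarrow> nat \<Rightarrow> nat multiset" where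
  "lab n ks js i = (if i < n then (\<Sum>j<length ks. replicate_mset (count (mset (blk ks js j)) i) (Suc j)) else {#})"

lemma count_lab: "count (lab n ks js i) x =
   (if i < n \<and> 0 < x \<and> x \<le> length ks then count (mset (blk ks js (x - 1))) i else 0)"
proof (cases "i < n")
  case True
  have "count (lab n ks js i) x = (\<Sum>j<length ks. if Suc j = x then count (mset (blk ks js j)) i else 0)"
    using True by (auto simp: lab_def count_sum intro!: sum.cong)
  also have "\<dots> = (\<Sum>j<length ks. if j = x - 1 \<and> 0 < x then count (mset (blk ks js j)) i else 0)"
    by (intro sum.cong) auto
  also have "\<dots> = (if 0 < x \<and> x \<le> length ks then count (mset (blk ks js (x - 1))) i else 0)"
    by (cases "0 < x") (auto simp: sum.delta')
  finally show ?thesis using True by simp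
qed (simp add: lab_def)

lemma lab_ge: "\<not> i < n \<Longrightarrow> lab n ks js i = {#}" by (simp add: lab_def)

lemma count_mset_concat_blk:
  assumes "length js = sum_list ks"
  shows "count (mset js) i = (\<Sum>j<length ks. count (mset (blk ks js j)) i)"
proof -
  have "count (mset js) i = count (mset (concat (map (blk ks js) [0..<length ks]))) i"
    using concat_blk[OF assms] by simp
  also have "\<dots> = (\<Sum>j<length ks. count (mset (blk ks js j)) i)"
    by (simp add: mset_concat interv_sum_list_conv_sum_set_nat atLeast0LessThan count_sum)
  finally show ?thesis .
qed

lemma size_lab:
  assumes "length js = sum_list ks" "i < n"
  shows "size (lab n ks js i) = count (mset js) i"
  using assms by (simp add: lab_def size_multiset_sum count_mset_concat_blk)

lemma prod_count:
  fixes js :: "nat list"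
  assumes "set js \<subseteq> {..<n}"
  shows "(\<Prod>a<length js. f (js ! a)) = (\<Prod>i<n. f i ^ count (mset js) i)"
  using assms
proof (induction js)
  case Nil then show ?case by simp
next
  case (Cons x js)
  have xn: "x < n" using Cons by auto
  have fx: "f x = (\<Prod>i<n. f i ^ (if i = x then 1 else 0))"
  proof -
    have "(\<Prod>i<n. f i ^ (if i = x then 1 else 0)) = (\<Prod>i<n. if i = x then f i else 1)"
      by (intro prod.cong) auto
    also have "\<dots> = f x" using xn by (subst prod.delta) auto
    finally show ?thesis by simp
  qed
  have "(\<Prod>a<length (x # js). f ((x # js) ! a)) = f x * (\<Prod>a<length js. f (js ! a))"
    by (simp only: length_Cons prod.lessThan_Suc_shift) simp
  also have "\<dots> = f x * (\<Prod>i<n. f i ^ count (mset js) i)" using Cons by simp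
  also have "\<dots> = (\<Prod>i<n. f i ^ (if i = x then 1 else 0)) * (\<Prod>i<n. f i ^ count (mset js) i)"
    by (subst fx) (rule refl)
  also have "\<dots> = (\<Prod>i<n. f i ^ count (mset (x # js)) i)"
    unfolding prod.distrib[symmetric] by (intro prod.cong) (auto simp: power_add[symmetric])
  finally show ?case .
qed




lemma count_image_inj: "inj f \<Longrightarrow> count (image_mset f M) (f x) = count M x"
proof -
  assume "inj f"
  then have "f -` {f x} = {x}" by (auto simp: inj_def)
  then show ?thesis by (auto simp: count_image_mset Int_insert_left not_in_iff)
qed

lemma lab_map_perm:
  assumes s: "s permutes {..<n}"
  shows "lab n ks (map s js) (s i) = lab n ks js i"
proof (cases "i < n")
  case True
  have sn: "s i < n" using True permutes_in_image[OF s] by auto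
  have inj: "inj s" using s permutes_inj by blast
  have "\<And>j. count (mset (blk ks (map s js) j)) (s i) = count (mset (blk ks js j)) i"
    by (simp add: blk_map count_image_inj[OF inj] mset_map)
  then show ?thesis using True sn by (simp add: lab_def)
next
  case False
  then have "s i = i" using s permutes_not_in by fastforce
  then show ?thesis using False by (simp add: lab_def)
qed

lemma lab_map_perm':
  assumes s: "s permutes {..<n}"
  shows "lab n ks (map s js) = lab n ks js \<circ> inv s"
proof
  fix x
  have "lab n ks (map s js) x = lab n ks (map s js) (s (inv s x))" using permutes_inverses(1)[OF s] by simp
  also have "\<dots> = lab n ks js (inv s x)" by (rule lab_map_perm[OF s])
  finally show "lab n ks (map s js) x = (lab n ks js \<circ> inv s) x" by simp
qed

lemma mset_blk_eq:
  assumes "set js \<subseteq> {..<n}" "set js' \<subseteq> {..<n}" "lab n ks js = lab n ks js'" "j < length ks"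
  shows "mset (blk ks js j) = mset (blk ks js' j)"
proof (rule multiset_eqI)
  fix i
  show "count (mset (blk ks js j)) i = count (mset (blk ks js' j)) i"
  proof (cases "i < n")
    case True
    have "count (lab n ks js i) (Suc j) = count (lab n ks js' i) (Suc j)" using assms by simp
    then show ?thesis using True assms(4) by (simp add: count_lab)
  next
    case False
    have "set (blk ks js j) \<subseteq> set js" "set (blk ks js' j) \<subseteq> set js'"
      unfolding blk_def by (meson order_trans set_drop_subset set_take_subset)+
    then have "i \<notin> set (blk ks js j)" "i \<notin> set (blk ks js' j)" using assms False by auto
    then show ?thesis by (metis count_mset_0_iff)
  qed
qed

lemma block_perm_exists:
  assumes len: "length js = sum_list ks" "length js' = sum_list ks"
    and eq: "\<And>j. j < length ks \<Longrightarrow> mset (blk ks js j) = mset (blk ks js' j)"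
  shows "\<exists>p. block_perm ks p \<and> map (\<lambda>a. js ! p a) [0..<sum_list ks] = js'"
proof -
  define K where "K = sum_list ks"
  define m where "m = length ks"
  define q where "q j = (SOME q. q permutes {..<ks ! j} \<and> permute_list q (blk ks js j) = blk ks js' j)" for j
  have q: "q j permutes {..<ks ! j} \<and> permute_list (q j) (blk ks js j) = blk ks js' j" if "j < m" for j
  proof -
    have e: "mset (blk ks js' j) = mset (blk ks js j)" using eq that m_def by simp
    obtain p where "p permutes {..<length (blk ks js j)}" "permute_list p (blk ks js j) = blk ks js' j"
      using mset_eq_permutation[OF e] by blast
    then have "\<exists>q. q permutes {..<ks ! j} \<and> permute_list q (blk ks js j) = blk ks js' j"
      using length_blk[OF len(1)] that m_def by auto
    then show ?thesis unfolding q_def by (rule someI_ex)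
  qed
  define I where "I j = {off ks j..<off ks (Suc j)}" for j
  have offS: "off ks (Suc j) = off ks j + ks ! j" if "j < m" for j using off_Suc[of ks j] that m_def by simp
  have offK: "off ks j \<le> K" for j
    using off_mono[of j "max j m" ks] off_len[of ks "max j m"] K_def m_def by simp
  define p where "p a = (if a < K then off ks (col ks a) + q (col ks a) (a - off ks (col ks a)) else a)" for a
  have colK: "col ks a < m" "a \<in> I (col ks a)" if "a < K" for a
    using col_spec[of a ks] that K_def m_def I_def by auto
  have col_I: "col ks a = j" if "a \<in> I j" for a j using col_unique[of ks j a] that I_def by auto
  have IK: "I j \<subseteq> {..<K}" for j using offK[of "Suc j"] I_def by auto
  have finI: "finite (I j)" for j by (simp add: I_def)
  have pI: "p a \<in> I j" if "a \<in> I j" "j < m" for a j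
  proof -
    have aK: "a < K" using that IK by auto
    have jc: "col ks a = j" using col_I[OF that(1)] .
    have pa: "p a = off ks j + q j (a - off ks j)" using aK jc by (simp add: p_def)
    have bnd: "off ks j \<le> a" "a < off ks j + ks ! j" using that(1) offS[OF that(2)] by (auto simp: I_def)
    then have "a - off ks j < ks ! j" by linarith
    then have "q j (a - off ks j) < ks ! j" using permutes_in_image[OF conjunct1[OF q[OF that(2)]]] by simp
    then show ?thesis unfolding pa I_def offS[OF that(2)] by simp
  qed
  have pinjI: "inj_on p (I j)" if "j < m" for j
  proof (rule inj_onI)
    fix a b assume ab: "a \<in> I j" "b \<in> I j" "p a = p b"
    then have "a < K" "b < K" using IK by auto
    then have "q j (a - off ks j) = q j (b - off ks j)"
      using ab col_I[OF ab(1)] col_I[OF ab(2)] by (simp add: p_def)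
    then have "a - off ks j = b - off ks j" using q[OF that] by (metis permutes_inverses(2))
    then show "a = b" using ab(1,2) by (auto simp: I_def)
  qed
  have pIeq: "p ` I j = I j" if "j < m" for j
  proof -
    have "p ` I j \<subseteq> I j" using pI[OF _ that] by blast
    then show ?thesis using endo_inj_surj[OF finI _ pinjI[OF that]] by blast
  qed
  have pK: "p ` {..<K} \<subseteq> {..<K}"
  proof
    fix y assume "y \<in> p ` {..<K}"
    then obtain a where a: "a < K" "y = p a" by auto
    then have "p a \<in> I (col ks a)" using pI colK by blast
    then show "y \<in> {..<K}" using IK a by blast
  qed
  have pinj: "inj_on p {..<K}"
  proof (rule inj_onI)
    fix a b assume ab: "a \<in> {..<K}" "b \<in> {..<K}" "p a = p b"
    have aK: "a < K" "b < K" using ab(1,2) by auto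
    have "p a \<in> I (col ks a)" by (rule pI[OF colK(2)[OF aK(1)] colK(1)[OF aK(1)]])
    moreover have "p b \<in> I (col ks b)" by (rule pI[OF colK(2)[OF aK(2)] colK(1)[OF aK(2)]])
    ultimately have "col ks (p a) = col ks a" "col ks (p b) = col ks b" by (simp_all add: col_I)
    then have c: "col ks a = col ks b" using ab(3) by simp
    have "a \<in> I (col ks a)" using colK(2)[OF aK(1)] .
    moreover have "b \<in> I (col ks a)" unfolding c using colK(2)[OF aK(2)] .
    ultimately show "a = b" using inj_onD[OF pinjI[OF colK(1)[OF aK(1)]] ab(3)] by blast
  qed
  have perm: "p permutes {..<K}"
  proof (rule bij_imp_permutes)
    show "bij_betw p {..<K} {..<K}" using endo_inj_surj[OF _ pK pinj] pinj by (simp add: bij_betw_def)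
  next
    fix x assume "x \<notin> {..<K}" then show "p x = x" by (simp add: p_def)
  qed
  have bp: "block_perm ks p"
    unfolding block_perm_def offs_off using perm[unfolded K_def] pIeq[unfolded I_def m_def] by blast
  have "map (\<lambda>a. js ! p a) [0..<K] = js'"
  proof (rule nth_equalityI)
    show "length (map (\<lambda>a. js ! p a) [0..<K]) = length js'" using len K_def by simp
  next
    fix a assume "a < length (map (\<lambda>a. js ! p a) [0..<K])"
    then have aK: "a < K" by simp
    define j where "j = col ks a"
    define t where "t = a - off ks j"
    have jm: "j < m" and aI: "a \<in> I j" using colK[OF aK] j_def by auto
    have t: "t < ks ! j" "a = off ks j + t" using aI offS[OF jm] I_def t_def by auto
    have qt: "q j t < ks ! j" using permutes_in_image[OF conjunct1[OF q[OF jm]]] t by simp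
    have "js ! p a = js ! (off ks j + q j t)" using aK p_def j_def t_def by simp
    also have "\<dots> = blk ks js j ! q j t" using blk_nth[OF len(1), of j "q j t"] jm qt m_def K_def by simp
    also have "\<dots> = permute_list (q j) (blk ks js j) ! t"
      using permute_list_nth[of "q j" "blk ks js j" t] q[OF jm] length_blk[OF len(1)] jm m_def t by simp
    also have "\<dots> = blk ks js' j ! t" using q[OF jm] by simp
    also have "\<dots> = js' ! a" using blk_nth[OF len(2), of j t] jm m_def t by simp
    finally show "map (\<lambda>a. js ! p a) [0..<K] ! a = js' ! a" using aK by simp
  qed
  then show ?thesis using bp K_def by blast
qed

lemma sym_lab:
  assumes T: "T \<in> symtens_space n ks" and js: "js \<in> tidx n (sum_list ks)" and js': "js' \<in> tidx n (sum_list ks)"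
    and eq: "lab n ks js = lab n ks js'"
  shows "T js = T js'"
proof -
  have l: "length js = sum_list ks" "length js' = sum_list ks" "set js \<subseteq> {..<n}" "set js' \<subseteq> {..<n}"
    using js js' by (auto simp: tidx_def)
  obtain p where p: "block_perm ks p" "map (\<lambda>a. js ! p a) [0..<sum_list ks] = js'"
    using block_perm_exists[OF l(1,2) mset_blk_eq[OF l(3,4) eq]] by blast
  have "T (map (\<lambda>a. js ! p a) [0..<sum_list ks]) = T js" using T p(1) js by (auto simp: symtens_space_def)
  then show ?thesis using p(2) by simp
qed

lemma lab_block_perm:
  assumes bp: "block_perm ks p" and len: "length is = sum_list ks"
  shows "lab n ks (map (\<lambda>a. is ! p a) [0..<sum_list ks]) = lab n ks is"
proof -
  have perm: "p permutes {..<sum_list ks}" and pI: "\<And>j. j < length ks \<Longrightarrow> p ` {off ks j..<off ks (Suc j)} = {off ks j..<off ks (Suc j)}"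
    using bp by (auto simp: block_perm_def offs_off)
  have inj: "inj_on p A" for A using inj_on_subset[OF permutes_inj[OF perm] subset_UNIV] .
  have "mset (blk ks (map (\<lambda>a. is ! p a) [0..<sum_list ks]) j) = mset (blk ks is j)" if "j < length ks" for j
  proof -
    have "blk ks (map (\<lambda>a. is ! p a) [0..<sum_list ks]) j = map (\<lambda>a. is ! p a) [off ks j..<off ks (Suc j)]"
      using blk_upt[of "map (\<lambda>a. is ! p a) [0..<sum_list ks]" ks j] that off_mono[of "Suc j" "length ks" ks] off_len[of ks "length ks"]
      by (simp cong: map_cong)
    then have "mset (blk ks (map (\<lambda>a. is ! p a) [0..<sum_list ks]) j) = image_mset (nth is) (image_mset p (mset_set {off ks j..<off ks (Suc j)}))"
      by (simp add: mset_upt image_mset.compositionality o_def mset_map)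
    also have "\<dots> = image_mset (nth is) (mset_set {off ks j..<off ks (Suc j)})"
      using image_mset_mset_set[OF inj] pI[OF that] by simp
    also have "\<dots> = mset (blk ks is j)" using blk_upt[OF len that] by (simp add: mset_upt mset_map)
    finally show ?thesis .
  qed
  then show ?thesis by (auto simp: lab_def fun_eq_iff intro!: sum.cong)
qed




section \<open>Standard index lists\<close>

definition idx :: "nat \<Rightarrow> nat list \<Rightarrow> (nat \<Rightarrow> nat multiset) \<Rightarrow> nat list" where
  "idx n ks c = concat (map (\<lambda>j. concat (map (\<lambda>i. replicate (count (c i) (Suc j)) i) [0..<n])) [0..<length ks])"

lemma idx_props:
  assumes cnt: "\<And>j. j < length ks \<Longrightarrow> (\<Sum>i<n. count (c i) (Suc j)) = ks ! j"
    and sub: "\<And>i x. i < n \<Longrightarrow> x \<in># c i \<Longrightarrow> 0 < x \<and> x \<le> length ks"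
  shows "idx n ks c \<in> tidx n (sum_list ks)" "lab n ks (idx n ks c) = (\<lambda>i. if i < n then c i else {#})"
proof -
  define xs where "xs = map (\<lambda>j. concat (map (\<lambda>i. replicate (count (c i) (Suc j)) i) [0..<n])) [0..<length ks]"
  have lenx: "length (xs ! j) = ks ! j" if "j < length ks" for j
    using that cnt[OF that] by (simp add: xs_def length_concat o_def interv_sum_list_conv_sum_set_nat atLeast0LessThan)
  have len: "length (idx n ks c) = sum_list ks"
  proof -
    have "length (idx n ks c) = (\<Sum>j<length ks. length (xs ! j))"
      by (simp add: idx_def xs_def[symmetric] length_concat interv_sum_list_conv_sum_set_nat atLeast0LessThan
         sum_list_sum_nth)
         (simp add: xs_def)
    also have "\<dots> = (\<Sum>j<length ks. ks ! j)" using lenx by simp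
    also have "\<dots> = sum_list ks" by (simp add: sum_list_sum_nth atLeast0LessThan)
    finally show ?thesis .
  qed
  show "idx n ks c \<in> tidx n (sum_list ks)" using len by (auto simp: tidx_def idx_def)
  have blk: "blk ks (idx n ks c) j = xs ! j" if "j < length ks" for j
    unfolding idx_def xs_def[symmetric] using lenx that by (intro blk_concat) (auto simp: xs_def)
  show "lab n ks (idx n ks c) = (\<lambda>i. if i < n then c i else {#})"
  proof (intro ext)
    fix i show "lab n ks (idx n ks c) i = (if i < n then c i else {#})"
    proof (cases "i < n")
      case True
      show ?thesis
      proof (rule multiset_eqI)
        fix x
        show "count (lab n ks (idx n ks c) i) x = count (if i < n then c i else {#}) x"
        proof (cases "0 < x \<and> x \<le> length ks")
          case True
          then have "x - 1 < length ks" by auto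
          then have "count (mset (blk ks (idx n ks c) (x - 1))) i = (\<Sum>i'<n. if i' = i then count (c i) (Suc (x - 1)) else 0)"
            by (auto simp: blk xs_def mset_concat interv_sum_list_conv_sum_set_nat atLeast0LessThan count_sum o_def
                  intro!: sum.cong)
          also have "\<dots> = count (c i) (Suc (x - 1))" using \<open>i < n\<close> by simp
          finally have "count (mset (blk ks (idx n ks c) (x - 1))) i = count (c i) (Suc (x - 1))" .
          then show ?thesis using True \<open>i < n\<close> by (simp add: count_lab)
        next
          case False
          then have "count (c i) x = 0" using sub[OF \<open>i < n\<close>] by (meson count_inI)
          then show ?thesis using False \<open>i < n\<close> by (auto simp: count_lab)
        qed
      qed
    qed (simp add: lab_def)
  qed
qed




definition Iset :: "nat \<Rightarrow> nat list \<Rightarrow> nat multiset multiset set" where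
  "Iset n ks = {P \<in> multiset_partitions (target_mset ks). size P \<le> n}"

definition good :: "nat \<Rightarrow> nat list \<Rightarrow> nat multiset multiset \<Rightarrow> (nat \<Rightarrow> nat multiset) \<Rightarrow> bool" where
  "good n ks P c \<longleftrightarrow>
    (\<forall>h. blockdiag n (Mtilde_comp n (mtype P)) h \<longleftrightarrow> monomial_mat n h \<and> (\<forall>i<n. c (gp n h i) = c i)) \<and>
    (\<forall>h. blockdiag n (Mtilde_comp n (mtype P)) h \<longrightarrow>
        block_char (Mtilde_comp n (mtype P)) h = (\<Prod>i<n. gv n h i ^ size (c i))) \<and>
    image_mset c (mset_set {..<n}) = P + replicate_mset (n - size P) {#}"

lemma count_target: "count (target_mset ks) x = (if 0 < x \<and> x \<le> length ks then ks ! (x - 1) else 0)"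
proof -
  have "count (target_mset ks) x = (\<Sum>i<length ks. if i = x - 1 \<and> 0 < x then ks ! i else 0)"
    by (auto simp: target_mset_def count_sum intro!: sum.cong)
  also have "\<dots> = (if 0 < x \<and> x \<le> length ks then ks ! (x - 1) else 0)"
    by (cases "0 < x") (auto simp: sum.delta')
  finally show ?thesis .
qed

lemma sum_mset_replicate_empty: "sum_mset (replicate_mset k ({#} :: 'a multiset)) = {#}"
  by (induction k) auto

lemma good_facts:
  assumes P: "P \<in> Iset n ks" and g: "good n ks P c"
  shows "\<And>j. j < length ks \<Longrightarrow> (\<Sum>i<n. count (c i) (Suc j)) = ks ! j"
    and "\<And>i x. i < n \<Longrightarrow> x \<in># c i \<Longrightarrow> 0 < x \<and> x \<le> length ks"
proof -
  have im: "image_mset c (mset_set {..<n}) = P + replicate_mset (n - size P) {#}" using g by (simp add: good_def)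
  have sP: "sum_mset P = target_mset ks" and eP: "{#} \<notin># P" using P by (auto simp: Iset_def multiset_partitions_def)
  have "(\<Sum>i<n. c i) = target_mset ks"
    by (simp add: sum_unfold_sum_mset im sP sum_mset_replicate_empty)
  then have "(\<Sum>i<n. count (c i) y) = count (target_mset ks) y" for y by (simp flip: count_sum)
  then show "\<And>j. j < length ks \<Longrightarrow> (\<Sum>i<n. count (c i) (Suc j)) = ks ! j" by (simp add: count_target)
  fix i x assume i: "i < n" and x: "x \<in># c i"
  have "c i \<in># image_mset c (mset_set {..<n})" using i by simp
  then have "c i \<in># P" using x im by (auto split: if_splits)
  then have "x \<in># sum_mset P" using x by (meson in_Union_mset_iff)
  then have "count (target_mset ks) x > 0" using sP by simp
  then show "0 < x \<and> x \<le> length ks" by (simp add: count_target split: if_splits)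
qed

lemma perm_of_image_eq:
  assumes "image_mset f (mset_set {..<n}) = image_mset g (mset_set {..<(n::nat)})"
  shows "\<exists>s. s permutes {..<n} \<and> (\<forall>i<n. f (s i) = g i)"
proof -
  have "mset (map g [0..<n]) = mset (map f [0..<n])"
    using assms by (simp add: mset_map mset_set_upto_eq_mset_upto)
  then obtain p where p: "p permutes {..<length (map f [0..<n])}" "permute_list p (map f [0..<n]) = map g [0..<n]"
    by (rule mset_eq_permutation)
  have "f (p i) = g i" if "i < n" for i
  proof -
    have "permute_list p (map f [0..<n]) ! i = map f [0..<n] ! p i" using permute_list_nth[OF p(1)] that by simp
    moreover have "p i < n" using permutes_in_image[OF p(1)] that by simp
    ultimately show ?thesis using p(2) that by simp
  qed
  then show ?thesis using p(1) by auto
qed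

definition Pof :: "nat \<Rightarrow> nat list \<Rightarrow> nat list \<Rightarrow> nat multiset multiset" where
  "Pof n ks js = filter_mset (\<lambda>A. A \<noteq> {#}) (image_mset (lab n ks js) (mset_set {..<n}))"

lemma image_split:
  fixes X :: "'a multiset multiset"
  shows "X = filter_mset (\<lambda>A. A \<noteq> {#}) X + replicate_mset (size X - size (filter_mset (\<lambda>A. A \<noteq> {#}) X)) {#}"
proof -
  have e: "X = filter_mset (\<lambda>A. A \<noteq> {#}) X + filter_mset (\<lambda>A. A = {#}) X"
    using multiset_partition[of X "\<lambda>A. A \<noteq> {#}"] by simp
  have f: "filter_mset (\<lambda>A. A = {#}) X = replicate_mset (count X {#}) {#}" by (rule filter_eq_replicate_mset)
  have "size X = size (filter_mset (\<lambda>A. A \<noteq> {#}) X) + count X {#}"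
    using arg_cong[OF e, of size] f by simp
  then show ?thesis using e f by simp
qed

lemma image_lab:
  "image_mset (lab n ks js) (mset_set {..<n}) = Pof n ks js + replicate_mset (n - size (Pof n ks js)) {#}"
  using image_split[of "image_mset (lab n ks js) (mset_set {..<n})"] by (simp add: Pof_def)

lemma Pof_I:
  assumes js: "js \<in> tidx n (sum_list ks)"
  shows "Pof n ks js \<in> Iset n ks"
proof -
  have len: "length js = sum_list ks" and sjs: "set js \<subseteq> {..<n}" using js by (auto simp: tidx_def)
  have "sum_mset (image_mset (lab n ks js) (mset_set {..<n})) = target_mset ks"
  proof (rule multiset_eqI)
    fix x
    have "count (sum_mset (image_mset (lab n ks js) (mset_set {..<n}))) x = (\<Sum>i<n. count (lab n ks js i) x)"
      by (simp flip: sum_unfold_sum_mset add: count_sum)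
    also have "\<dots> = (if 0 < x \<and> x \<le> length ks then (\<Sum>i<n. count (mset (blk ks js (x - 1))) i) else 0)"
      by (auto simp: count_lab)
    also have "\<dots> = count (target_mset ks) x"
    proof (cases "0 < x \<and> x \<le> length ks")
      case True
      have sb: "set (blk ks js (x - 1)) \<subseteq> {..<n}"
        using sjs unfolding blk_def by (meson order_trans set_drop_subset set_take_subset)
      have "(\<Sum>i<n. count (mset (blk ks js (x - 1))) i) = (\<Sum>i\<in>set_mset (mset (blk ks js (x - 1))). count (mset (blk ks js (x - 1))) i)"
        using sb by (intro sum.mono_neutral_right) (auto simp: count_mset_0_iff)
      also have "\<dots> = length (blk ks js (x - 1))" using size_multiset_overloaded_eq[of "mset (blk ks js (x - 1))"] by simp
      also have "\<dots> = ks ! (x - 1)" using True by (intro length_blk[OF len]) linarith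
      finally show ?thesis using True by (simp add: count_target)
    qed (auto simp: count_target)
    finally show "count (sum_mset (image_mset (lab n ks js) (mset_set {..<n}))) x = count (target_mset ks) x" .
  qed
  then have "sum_mset (Pof n ks js) = target_mset ks"
    using arg_cong[OF image_lab[of n ks js], of sum_mset] by (simp add: sum_mset_replicate_empty)
  moreover have "size (Pof n ks js) \<le> n"
    unfolding Pof_def using size_filter_mset_lesseq[of _ "image_mset (lab n ks js) (mset_set {..<n})"] by simp
  ultimately show ?thesis by (auto simp: Iset_def multiset_partitions_def Pof_def)
qed

lemma Pof_eq:
  assumes P: "P \<in> Iset n ks" and im: "image_mset (lab n ks js) (mset_set {..<n}) = P + replicate_mset (n - size P) {#}"
  shows "Pof n ks js = P"
proof -
  have "{#} \<notin># P" using P by (auto simp: Iset_def multiset_partitions_def)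
  then have "filter_mset (\<lambda>A. A \<noteq> {#}) P = P" by (auto intro: filter_mset_eq_conv[THEN iffD2])
  then show ?thesis unfolding Pof_def im by (simp add: filter_union_mset)
qed




context
  fixes n :: nat and ks :: "nat list" and cc :: "nat multiset multiset \<Rightarrow> nat \<Rightarrow> nat multiset"
  assumes goodc: "\<And>P. P \<in> Iset n ks \<Longrightarrow> good n ks P (cc P)"
begin

definition "std P = idx n ks (cc P)"

definition Phi :: "(nat list \<Rightarrow> complex) \<Rightarrow> nat multiset multiset \<times> cmat \<Rightarrow> complex" where
  "Phi T = (\<lambda>(P, x). if P \<in> Iset n ks \<and> monomial_mat n x then tens_act n (sum_list ks) x T (std P) else 0)"

definition "sig js = (SOME s. s permutes {..<n} \<and> (\<forall>i<n. lab n ks js (s i) = cc (Pof n ks js) i))"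

definition Psi :: "(nat multiset multiset \<times> cmat \<Rightarrow> complex) \<Rightarrow> nat list \<Rightarrow> complex" where
  "Psi F = (\<lambda>js. if js \<in> tidx n (sum_list ks) then F (Pof n ks js, mk n (sig js) (\<lambda>_. 1)) else 0)"

lemma std_props:
  assumes P: "P \<in> Iset n ks"
  shows "std P \<in> tidx n (sum_list ks)" "lab n ks (std P) = (\<lambda>i. if i < n then cc P i else {#})"
  using idx_props[OF good_facts[OF P goodc[OF P]]] by (simp_all add: std_def)

lemma good_im: "P \<in> Iset n ks \<Longrightarrow> image_mset (cc P) (mset_set {..<n}) = P + replicate_mset (n - size P) {#}"
  using goodc by (simp add: good_def)

lemma good_bd: "P \<in> Iset n ks \<Longrightarrow> blockdiag n (Mtilde_comp n (mtype P)) h \<longleftrightarrow> monomial_mat n h \<and> (\<forall>i<n. cc P (gp n h i) = cc P i)"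
  using goodc by (simp add: good_def)

lemma good_char: "P \<in> Iset n ks \<Longrightarrow> blockdiag n (Mtilde_comp n (mtype P)) h \<Longrightarrow>
   block_char (Mtilde_comp n (mtype P)) h = (\<Prod>i<n. gv n h i ^ size (cc P i))"
  using goodc by (simp add: good_def)

lemma phi_formula:
  assumes P: "P \<in> Iset n ks" and x: "monomial_mat n x"
  shows "tens_act n (sum_list ks) x T (std P) = (\<Prod>i<n. gv n x i ^ size (cc P i)) * T (map (gp n x) (std P))"
proof -
  note s = std_props[OF P]
  have l: "length (std P) = sum_list ks" "set (std P) \<subseteq> {..<n}" using s(1) by (auto simp: tidx_def)
  have "(\<Prod>a<sum_list ks. gv n x (std P ! a)) = (\<Prod>i<n. gv n x i ^ count (mset (std P)) i)"
    using prod_count[OF l(2)] l(1) by simp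
  also have "\<dots> = (\<Prod>i<n. gv n x i ^ size (cc P i))"
  proof (intro prod.cong refl)
    fix i assume "i \<in> {..<n}"
    then have "count (mset (std P)) i = size (cc P i)" using size_lab[OF l(1), of i n] s(2) by simp
    then show "gv n x i ^ count (mset (std P)) i = gv n x i ^ size (cc P i)" by simp
  qed
  finally show ?thesis using tens_act_mono[OF x s(1)] by simp
qed

lemma lab_map_std:
  assumes P: "P \<in> Iset n ks" and s: "s permutes {..<n}"
  shows "lab n ks (map s (std P)) = (\<lambda>i. if i < n then cc P (inv s i) else {#})"
proof
  fix i
  have "inv s i < n \<longleftrightarrow> i < n" using s
    by (metis lessThan_iff permutes_inv permutes_in_image)
  then show "lab n ks (map s (std P)) i = (if i < n then cc P (inv s i) else {#})"
    using lab_map_perm'[OF s] std_props(2)[OF P] by simp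
qed

lemma sig_spec:
  assumes js: "js \<in> tidx n (sum_list ks)"
  shows "sig js permutes {..<n}" "\<And>i. i < n \<Longrightarrow> lab n ks js (sig js i) = cc (Pof n ks js) i"
proof -
  have PI: "Pof n ks js \<in> Iset n ks" by (rule Pof_I[OF js])
  have "image_mset (lab n ks js) (mset_set {..<n}) = image_mset (cc (Pof n ks js)) (mset_set {..<n})"
    using image_lab good_im[OF PI] by simp
  then have "\<exists>s. s permutes {..<n} \<and> (\<forall>i<n. lab n ks js (s i) = cc (Pof n ks js) i)"
    by (rule perm_of_image_eq)
  then have "sig js permutes {..<n} \<and> (\<forall>i<n. lab n ks js (sig js i) = cc (Pof n ks js) i)"
    unfolding sig_def by (rule someI_ex)
  then show "sig js permutes {..<n}" "\<And>i. i < n \<Longrightarrow> lab n ks js (sig js i) = cc (Pof n ks js) i" by auto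
qed

lemma pm_props:
  assumes s: "s permutes {..<n}"
  shows "monomial_mat n (mk n s (\<lambda>_. 1))" "gp n (mk n s (\<lambda>_. 1)) = s" "\<And>i. i < n \<Longrightarrow> gv n (mk n s (\<lambda>_. 1)) i = 1"
  using mk_mono[OF s, of "\<lambda>_. 1"] by auto

lemma Phi_in:
  assumes T: "T \<in> symtens_space n ks"
  shows "Phi T \<in> dsum_space (Iset n ks) (\<lambda>P. Mtilde_space n (mtype P))"
  unfolding dsum_space_def
proof (intro CollectI allI conjI impI)
  fix P assume "P \<notin> Iset n ks" then show "(\<lambda>x. Phi T (P, x)) = (\<lambda>x. 0)" by (simp add: Phi_def)
next
  fix P assume P: "P \<in> Iset n ks"
  show "(\<lambda>x. Phi T (P, x)) \<in> Mtilde_space n (mtype P)"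
    unfolding Mtilde_space_def ind_space_def
  proof (intro CollectI allI conjI impI)
    fix x assume "\<not> monomial_mat n x" then show "Phi T (P, x) = 0" by (simp add: Phi_def)
  next
    fix h x assume hx: "blockdiag n (Mtilde_comp n (mtype P)) h \<and> monomial_mat n x"
    then have h: "monomial_mat n h" and hc: "\<And>i. i < n \<Longrightarrow> cc P (gp n h i) = cc P i" and x: "monomial_mat n x"
      using good_bd[OF P] by auto
    have ph: "gp n h permutes {..<n}" and px: "gp n x permutes {..<n}" using gp_permutes h x by auto
    have hn: "\<And>i. i < n \<Longrightarrow> gp n h i < n" using permutes_in_image[OF ph] by simp
    note hxm = mmul_mono[OF h x]
    let ?w = "\<lambda>y. \<Prod>i<n. gv n y i ^ size (cc P i)"
    have w: "?w (mmul n h x) = ?w h * ?w x"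
    proof -
      have "?w (mmul n h x) = (\<Prod>i<n. gv n h i ^ size (cc P i) * (gv n x (gp n h i) ^ size (cc P (gp n h i))))"
        using hxm(3) hc by (intro prod.cong) (auto simp: power_mult_distrib)
      also have "\<dots> = ?w h * (\<Prod>i<n. gv n x (gp n h i) ^ size (cc P (gp n h i)))" by (simp add: prod.distrib)
      also have "(\<Prod>i<n. gv n x (gp n h i) ^ size (cc P (gp n h i))) = ?w x"
        using prod.permute[OF ph, of "\<lambda>i. gv n x i ^ size (cc P i)"] by (simp add: o_def)
      finally show ?thesis .
    qed
    note sp = std_props[OF P]
    have mh: "map (gp n h) (std P) \<in> tidx n (sum_list ks)" by (rule tidx_map[OF sp(1) ph])
    have lh: "lab n ks (map (gp n h) (std P)) = lab n ks (std P)"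
    proof -
      have "cc P (inv (gp n h) i) = cc P i" if "i < n" for i
      proof -
        have "inv (gp n h) i < n" using that ph by (metis lessThan_iff permutes_inv permutes_in_image)
        then have "cc P (gp n h (inv (gp n h) i)) = cc P (inv (gp n h) i)" by (rule hc)
        then show ?thesis using permutes_inverses(1)[OF ph] by simp
      qed
      then show ?thesis using lab_map_std[OF P ph] sp(2) by auto
    qed
    have "T (map (gp n x) (map (gp n h) (std P))) = T (map (gp n x) (std P))"
      using sym_lab[OF T tidx_map[OF mh px] tidx_map[OF sp(1) px]] lab_map_perm'[OF px] lh by metis
    then have "Phi T (P, mmul n h x) = ?w h * Phi T (P, x)"
      using phi_formula[OF P hxm(1)] phi_formula[OF P x] w hxm(2) x hxm(1) P
      by (simp add: Phi_def o_def)
    then show "Phi T (P, mmul n h x) = block_char (Mtilde_comp n (mtype P)) h * Phi T (P, x)"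
      using good_char[OF P] hx by simp
  qed
qed

lemma Psi_in:
  assumes F: "F \<in> dsum_space (Iset n ks) (\<lambda>P. Mtilde_space n (mtype P))"
  shows "Psi F \<in> symtens_space n ks"
  unfolding symtens_space_def
proof (intro CollectI allI conjI impI ballI)
  fix ys assume "ys \<notin> tidx n (sum_list ks)" then show "Psi F ys = 0" by (simp add: Psi_def)
next
  fix p ys assume bp: "block_perm ks p" and ys: "ys \<in> tidx n (sum_list ks)"
  let ?js = "map (\<lambda>a. ys ! p a) [0..<sum_list ks]"
  have len: "length ys = sum_list ks" and sis: "set ys \<subseteq> {..<n}" using ys by (auto simp: tidx_def)
  have perm: "p permutes {..<sum_list ks}" using bp by (simp add: block_perm_def)
  have "set ?js \<subseteq> set ys"
  proof
    fix y assume "y \<in> set ?js"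
    then obtain a where a: "a < sum_list ks" "y = ys ! p a" by auto
    have "p a < sum_list ks" using permutes_in_image[OF perm] a(1) by simp
    then show "y \<in> set ys" using a len by simp
  qed
  then have js: "?js \<in> tidx n (sum_list ks)" using sis by (auto simp: tidx_def)
  have "lab n ks ?js = lab n ks ys" by (rule lab_block_perm[OF bp len])
  then show "Psi F ?js = Psi F ys" using js ys by (simp add: Psi_def sig_def Pof_def)
qed

lemma Psi_Phi:
  assumes T: "T \<in> symtens_space n ks"
  shows "Psi (Phi T) = T"
proof
  fix js
  show "Psi (Phi T) js = T js"
  proof (cases "js \<in> tidx n (sum_list ks)")
    case False
    then show ?thesis using T by (simp add: Psi_def symtens_space_def)
  next
    case js: True
    define P where "P = Pof n ks js"
    define s where "s = sig js"
    have P: "P \<in> Iset n ks" using Pof_I[OF js] P_def by simp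
    have s: "s permutes {..<n}" and sl: "\<And>i. i < n \<Longrightarrow> lab n ks js (s i) = cc P i"
      using sig_spec[OF js] s_def P_def by auto
    note pm = pm_props[OF s]
    have "Phi T (P, mk n s (\<lambda>_. 1)) = T (map s (std P))"
      using phi_formula[OF P pm(1)] P pm by (simp add: Phi_def)
    also have "\<dots> = T js"
    proof (rule sym_lab[OF T tidx_map[OF std_props(1)[OF P] s] js])
      show "lab n ks (map s (std P)) = lab n ks js"
      proof
        fix i show "lab n ks (map s (std P)) i = lab n ks js i"
        proof (cases "i < n")
          case True
          have "inv s i < n" using True s by (metis lessThan_iff permutes_inv permutes_in_image)
          then have "lab n ks js (s (inv s i)) = cc P (inv s i)" by (rule sl)
          then show ?thesis using True lab_map_std[OF P s] permutes_inverses(1)[OF s] by simp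
        next
          case False
          then show ?thesis using lab_map_std[OF P s] by (simp add: lab_ge)
        qed
      qed
    qed
    finally show ?thesis using js by (simp add: Psi_def P_def s_def)
  qed
qed

lemma Phi_Psi:
  assumes F: "F \<in> dsum_space (Iset n ks) (\<lambda>P. Mtilde_space n (mtype P))"
  shows "Phi (Psi F) = F"
proof
  fix Px :: "nat multiset multiset \<times> cmat"
  obtain P x where Px: "Px = (P, x)" by fastforce
  have FP: "P \<notin> Iset n ks \<Longrightarrow> F (P, x) = 0" and
       FI: "P \<in> Iset n ks \<Longrightarrow> (\<lambda>x. F (P, x)) \<in> ind_space n (Mtilde_comp n (mtype P))"
    using F by (auto simp: dsum_space_def Mtilde_space_def fun_eq_iff)
  show "Phi (Psi F) Px = F Px"
  proof (cases "P \<in> Iset n ks \<and> monomial_mat n x")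
    case False
    then show ?thesis
    proof (cases "P \<in> Iset n ks")
      case True
      then have "\<not> monomial_mat n x" using False by simp
      then show ?thesis using FI[OF True] Px False by (simp add: Phi_def ind_space_def)
    qed (simp add: Phi_def Px FP)
  next
    case True
    then have P: "P \<in> Iset n ks" and x: "monomial_mat n x" by auto
    have px: "gp n x permutes {..<n}" using gp_permutes[OF x] .
    note sp = std_props[OF P]
    define js where "js = map (gp n x) (std P)"
    have js: "js \<in> tidx n (sum_list ks)" unfolding js_def by (rule tidx_map[OF sp(1) px])
    have ljs: "lab n ks js = (\<lambda>i. if i < n then cc P (inv (gp n x) i) else {#})"
      unfolding js_def by (rule lab_map_std[OF P px])
    have invn: "\<And>i. i < n \<Longrightarrow> inv (gp n x) i < n" using px by (metis lessThan_iff permutes_inv permutes_in_image)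
    have "image_mset (lab n ks js) (mset_set {..<n}) = image_mset (cc P \<circ> inv (gp n x)) (mset_set {..<n})"
      using ljs by (intro image_mset_cong) auto
    also have "\<dots> = image_mset (cc P) (image_mset (inv (gp n x)) (mset_set {..<n}))"
      by (simp add: image_mset.compositionality)
    also have "image_mset (inv (gp n x)) (mset_set {..<n}) = mset_set {..<n}"
      by (rule permutes_image_mset[OF permutes_inv[OF px]])
    finally have "image_mset (lab n ks js) (mset_set {..<n}) = P + replicate_mset (n - size P) {#}"
      using good_im[OF P] by simp
    then have Pjs: "Pof n ks js = P" by (rule Pof_eq[OF P])
    define s where "s = sig js"
    have s: "s permutes {..<n}" and sl: "\<And>i. i < n \<Longrightarrow> lab n ks js (s i) = cc P i"
      using sig_spec[OF js] s_def Pjs by auto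
    have sn: "\<And>i. i < n \<Longrightarrow> s i < n" using permutes_in_image[OF s] by simp
    note pm = pm_props[OF s]
    let ?w = "\<Prod>i<n. gv n x i ^ size (cc P i)"
    have "Phi (Psi F) (P, x) = ?w * Psi F js"
      using phi_formula[OF P x] P x by (simp add: Phi_def js_def)
    also have "Psi F js = F (P, mk n s (\<lambda>_. 1))" using js by (simp add: Psi_def Pjs s_def)
    finally have lhs: "Phi (Psi F) (P, x) = ?w * F (P, mk n s (\<lambda>_. 1))" .
    define h where "h = mk n (inv s \<circ> gp n x) (gv n x)"
    have ph: "inv s \<circ> gp n x permutes {..<n}" by (rule permutes_compose[OF px permutes_inv[OF s]])
    note hm = mk_mono[OF ph, of "gv n x", folded h_def]
    have hm1: "monomial_mat n h" and hm2: "gp n h = inv s \<circ> gp n x" and hm3: "\<And>i. i < n \<Longrightarrow> gv n h i = gv n x i"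
      using hm gv_nz[OF x] by auto
    have hc: "cc P (gp n h i) = cc P i" if i: "i < n" for i
    proof -
      define j where "j = inv s (gp n x i)"
      have xi: "gp n x i < n" using permutes_in_image[OF px] i by simp
      have jn: "j < n" using xi s j_def by (metis lessThan_iff permutes_inv permutes_in_image)
      have sj: "s j = gp n x i" using permutes_inverses(1)[OF s] j_def by simp
      have "lab n ks js (s j) = cc P j" by (rule sl[OF jn])
      then have "cc P (inv (gp n x) (gp n x i)) = cc P j" using ljs sj xi by simp
      then have "cc P i = cc P j" using permutes_inverses(2)[OF px] by simp
      then show ?thesis using hm2 j_def by simp
    qed
    have bd: "blockdiag n (Mtilde_comp n (mtype P)) h" using good_bd[OF P] hm1 hc by simp
    have ch: "block_char (Mtilde_comp n (mtype P)) h = ?w"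
      using good_char[OF P bd] hm3 by simp
    have "mmul n h (mk n s (\<lambda>_. 1)) = mk n (s \<circ> (inv s \<circ> gp n x)) (\<lambda>i. gv n x i * 1)"
      unfolding h_def by (rule mmul_mk[OF ph s])
    also have "\<dots> = mk n (gp n x) (gv n x)"
      by (rule mk_cong) (simp_all add: permutes_inverses(1)[OF s])
    also have "\<dots> = x" by (rule mono_eq_mk[OF x, symmetric])
    finally have hx: "mmul n h (mk n s (\<lambda>_. 1)) = x" .
    have "F (P, mmul n h (mk n s (\<lambda>_. 1))) = block_char (Mtilde_comp n (mtype P)) h * F (P, mk n s (\<lambda>_. 1))"
      using FI[OF P] bd pm(1) by (simp add: ind_space_def)
    then have "F (P, x) = ?w * F (P, mk n s (\<lambda>_. 1))" using hx ch by simp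
    then show ?thesis using lhs Px by simp
  qed
qed

lemma Phi_intertw:
  assumes g: "monomial_mat n g"
  shows "Phi (tens_act n (sum_list ks) g T) = dsum_act (\<lambda>P. ind_act n) g (Phi T)"
proof
  fix Px :: "nat multiset multiset \<times> cmat"
  obtain P x where Px: "Px = (P, x)" by fastforce
  show "Phi (tens_act n (sum_list ks) g T) Px = dsum_act (\<lambda>P. ind_act n) g (Phi T) Px"
  proof (cases "P \<in> Iset n ks \<and> monomial_mat n x")
    case True
    then have P: "P \<in> Iset n ks" and x: "monomial_mat n x" by auto
    have "tens_act n (sum_list ks) x (tens_act n (sum_list ks) g T) (std P) = tens_act n (sum_list ks) (mmul n x g) T (std P)"
      by (rule tens_act_assoc[OF x g std_props(1)[OF P]])
    then show ?thesis using Px P x mmul_mono(1)[OF x g] by (simp add: Phi_def dsum_act_def ind_act_def)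
  next
    case False
    then show ?thesis using Px by (auto simp: Phi_def dsum_act_def ind_act_def)
  qed
qed

lemma Phi_add: "Phi (\<lambda>x. u x + v x) = (\<lambda>y. Phi u y + Phi v y)"
  by (auto simp: Phi_def fun_eq_iff tens_act_add)

lemma Phi_scale: "Phi (\<lambda>x. c * u x) = (\<lambda>y. c * Phi u y)"
  by (auto simp: Phi_def fun_eq_iff tens_act_scale)

lemma generic_iso:
  "rep_iso n (symtens_space n ks, tens_act n (sum_list ks))
     (dsum_space (Iset n ks) (\<lambda>P. Mtilde_space n (mtype P)), dsum_act (\<lambda>P. ind_act n))"
  unfolding rep_iso_def fst_conv snd_conv
proof (intro exI[of _ Phi] conjI ballI allI impI)
  show "bij_betw Phi (symtens_space n ks) (dsum_space (Iset n ks) (\<lambda>P. Mtilde_space n (mtype P)))"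
    by (rule bij_betw_byWitness[where f' = Psi]) (auto simp: Psi_Phi Phi_Psi Phi_in Psi_in)
qed (simp_all add: Phi_add Phi_scale Phi_intertw)

end



lemma image_mset_as_sum: "image_mset c (mset_set A) = (\<Sum>i\<in>A. {#c i#})"
proof -
  have "(\<Sum>i\<in>A. {#c i#}) = sum_mset (image_mset (\<lambda>x. {#x#}) (image_mset c (mset_set A)))"
    by (simp add: sum_unfold_sum_mset image_mset.compositionality o_def)
  then show ?thesis using Union_image_single_mset[of "image_mset c (mset_set A)"] by simp
qed

lemma cblock_off: "cblock cs k = {off (map fst cs) k..<off (map fst cs) (Suc k)}"
  by (simp add: cblock_def off_def take_map)

lemma comp_good:
  fixes CL :: "(nat \<times> int \<times> nat multiset) list"
  assumes cs: "cs = map (\<lambda>t. (fst t, fst (snd t))) CL"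
    and sumr: "sum_list (map fst CL) = n"
    and wt: "\<And>t. t \<in> set CL \<Longrightarrow> fst (snd t) = int (size (snd (snd t)))"
    and dist: "distinct (map (\<lambda>t. snd (snd t)) CL)"
  defines "c \<equiv> (\<lambda>i. snd (snd (CL ! col (map fst CL) i)))"
  shows "\<And>h. blockdiag n cs h \<longleftrightarrow> monomial_mat n h \<and> (\<forall>i<n. c (gp n h i) = c i)"
    and "\<And>h. blockdiag n cs h \<Longrightarrow> block_char cs h = (\<Prod>i<n. gv n h i ^ size (c i))"
    and "image_mset c (mset_set {..<n}) = sum_list (map (\<lambda>t. replicate_mset (fst t) (snd (snd t))) CL)"
proof -
  define l where "l = map fst CL"
  have l2: "map fst cs = l" using cs l_def by simp
  have lenl: "length l = length CL" "length cs = length CL" using l_def cs by auto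
  have suml: "sum_list l = n" using sumr l_def by simp
  define B where "B k = {off l k..<off l (Suc k)}" for k
  have cb: "cblock cs k = B k" for k using cblock_off[of cs k] l2 B_def by simp
  define A where "A k = snd (snd (CL ! k))" for k
  have cA: "c i = A (col l i)" for i by (simp add: c_def A_def l_def)
  have colB: "i < n \<Longrightarrow> col l i < length CL \<and> i \<in> B (col l i)" for i
    using col_spec[of i l] suml lenl B_def by auto
  have Bcol: "i \<in> B k \<Longrightarrow> col l i = k" for i k using col_unique[of l k i] B_def by auto
  have Bn: "i \<in> B k \<Longrightarrow> i < n" for i k
  proof -
    assume "i \<in> B k"
    then have "i < off l (Suc k)" by (simp add: B_def)
    moreover have "off l (Suc k) \<le> n"
      using off_mono[of "Suc k" "max (Suc k) (length l)" l] off_len[of l "max (Suc k) (length l)"] suml by simp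
    ultimately show "i < n" by simp
  qed
  have Ainj: "k < length CL \<Longrightarrow> k' < length CL \<Longrightarrow> A k = A k' \<Longrightarrow> k = k'" for k k'
    using dist unfolding A_def distinct_conv_nth by (metis length_map nth_map)
  show G1: "blockdiag n cs h \<longleftrightarrow> monomial_mat n h \<and> (\<forall>i<n. c (gp n h i) = c i)" for h
  proof
    assume bd: "blockdiag n cs h"
    then have h: "monomial_mat n h" by (simp add: blockdiag_def)
    have "c (gp n h i) = c i" if i: "i < n" for i
    proof -
      have "h i (gp n h i) \<noteq> 0" using gp_spec[OF h i] by simp
      then have "\<exists>k. i \<in> B k \<and> gp n h i \<in> B k" using bd cb unfolding blockdiag_def by metis
      then obtain k where "i \<in> B k" "gp n h i \<in> B k" by blast
      then show ?thesis using Bcol cA by metis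
    qed
    then show "monomial_mat n h \<and> (\<forall>i<n. c (gp n h i) = c i)" using h by simp
  next
    assume a: "monomial_mat n h \<and> (\<forall>i<n. c (gp n h i) = c i)"
    then have h: "monomial_mat n h" by simp
    show "blockdiag n cs h" unfolding blockdiag_def
    proof (intro conjI h allI impI)
      fix i j assume "h i j \<noteq> 0"
      then have i: "i < n" and j: "j = gp n h i" using gp_nz_iff[OF h] by auto
      have jn: "j < n" using gp_spec[OF h i] j by simp
      have "A (col l j) = A (col l i)" using a i j cA by metis
      then have "col l j = col l i" using Ainj colB i jn by blast
      then show "\<exists>k<length cs. i \<in> cblock cs k \<and> j \<in> cblock cs k"
        using colB[OF i] colB[OF jn] cb lenl by metis
    qed
  qed
  show "block_char cs h = (\<Prod>i<n. gv n h i ^ size (c i))" if bd: "blockdiag n cs h" for h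
  proof -
    have h: "monomial_mat n h" and hc: "\<And>i. i < n \<Longrightarrow> c (gp n h i) = c i" using G1 bd by auto
    have inner: "(\<Prod>j\<in>B k. if h i j = 0 then 1 else h i j) = gv n h i" if ik: "i \<in> B k" for i k
    proof -
      have i: "i < n" using Bn ik .
      have gn: "gp n h i < n" using gp_spec[OF h i] by simp
      have "col l (gp n h i) = col l i"
        using hc[OF i] cA Ainj colB[OF i] colB[OF gn] by metis
      then have gB: "gp n h i \<in> B k" using colB[OF gn] Bcol[OF ik] by simp
      have "(\<Prod>j\<in>B k. if h i j = 0 then 1 else h i j) = (\<Prod>j\<in>B k. if j = gp n h i then gv n h i else 1)"
        using gp_nz_iff[OF h, of i] i by (intro prod.cong refl) (auto simp: gv_def)
      also have "\<dots> = gv n h i" using gB by (simp add: B_def)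
      finally show ?thesis .
    qed
    have "block_char cs h = (\<Prod>k<length CL. (\<Prod>i\<in>B k. gv n h i) powi (snd (cs ! k)))"
      unfolding block_char_def lenl(2) cb using inner by (intro prod.cong refl) simp
    also have "\<dots> = (\<Prod>k<length CL. \<Prod>i\<in>B k. gv n h i ^ size (c i))"
    proof (intro prod.cong refl)
      fix k assume k: "k \<in> {..<length CL}"
      have "snd (cs ! k) = int (size (A k))" using k wt[of "CL ! k"] cs by (simp add: A_def)
      then have "(\<Prod>i\<in>B k. gv n h i) powi (snd (cs ! k)) = (\<Prod>i\<in>B k. gv n h i ^ size (A k))"
        by (simp add: power_int_of_nat prod_power_distrib)
      also have "\<dots> = (\<Prod>i\<in>B k. gv n h i ^ size (c i))" using Bcol cA by (intro prod.cong refl) auto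
      finally show "(\<Prod>i\<in>B k. gv n h i) powi (snd (cs ! k)) = (\<Prod>i\<in>B k. gv n h i ^ size (c i))" .
    qed
    also have "\<dots> = (\<Prod>i<off l (length l). gv n h i ^ size (c i))" by (simp add: prod_off B_def lenl)
    also have "off l (length l) = n" using off_len[of l "length l"] suml by simp
    finally show ?thesis .
  qed
  have "image_mset c (mset_set {..<n}) = (\<Sum>i<off l (length l). {#c i#})"
    using off_len[of l "length l"] suml by (simp add: image_mset_as_sum)
  also have "\<dots> = (\<Sum>k<length CL. \<Sum>i\<in>B k. {#c i#})" by (simp add: sum_off B_def lenl)
  also have "\<dots> = (\<Sum>k<length CL. replicate_mset (fst (CL ! k)) (A k))"
  proof (intro sum.cong refl)
    fix k assume k: "k \<in> {..<length CL}"
    have "(\<Sum>i\<in>B k. {#c i#}) = image_mset (\<lambda>_. A k) (mset_set (B k))"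
      using Bcol cA by (simp add: image_mset_as_sum)
    also have "\<dots> = replicate_mset (card (B k)) (A k)" by (simp add: image_mset_const_eq)
    also have "card (B k) = fst (CL ! k)" using k off_Suc[of l k] lenl by (simp add: B_def l_def)
    finally show "(\<Sum>i\<in>B k. {#c i#}) = replicate_mset (fst (CL ! k)) (A k)" .
  qed
  also have "\<dots> = sum_list (map (\<lambda>t. replicate_mset (fst t) (snd (snd t))) CL)"
    by (simp add: sum_list_sum_nth atLeast0LessThan A_def)
  finally show "image_mset c (mset_set {..<n}) = sum_list (map (\<lambda>t. replicate_mset (fst t) (snd (snd t))) CL)" .
qed




lemma sum_list_concat': "sum_list (concat xss) = sum_list (map sum_list (xss :: 'a::monoid_add list list))"
  by (induction xss) auto

lemma reorder:
  assumes "mset (map f xs) = mset ys"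
  shows "\<exists>xs'. mset xs' = mset xs \<and> map f xs' = ys"
proof -
  obtain p where p: "p permutes {..<length (map f xs)}" "permute_list p (map f xs) = ys"
    using mset_eq_permutation[OF assms[symmetric]] by blast
  have p': "p permutes {..<length xs}" using p(1) by simp
  show ?thesis
    by (intro exI[of _ "permute_list p xs"]) (simp add: mset_permute_list[OF p'] permute_list_map[OF p', symmetric] p(2))
qed

lemma sum_by_size:
  fixes P :: "'a multiset multiset" and g :: "'a multiset \<Rightarrow> 'b::comm_monoid_add"
  assumes eP: "{#} \<notin># P"
  shows "sum g (set_mset P) = (\<Sum>i<Max (insert 0 (size ` set_mset P)). sum g {A \<in> set_mset P. size A = Suc i})"
proof -
  define Mx where "Mx = Max (insert 0 (size ` set_mset P))"
  have "set_mset P = (\<Union>i\<in>{..<Mx}. {A \<in> set_mset P. size A = Suc i})"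
  proof (intro equalityI subsetI)
    fix A assume A: "A \<in> set_mset P"
    then have "size A \<le> Mx" unfolding Mx_def by (intro Max_ge) auto
    moreover obtain k where k: "size A = Suc k"
      using A eP by (metis gr0_implies_Suc size_eq_0_iff_empty neq0_conv)
    ultimately have "k \<in> {..<Mx}" by simp
    then show "A \<in> (\<Union>i\<in>{..<Mx}. {A \<in> set_mset P. size A = Suc i})" using A k
      by (intro UN_I[of k]) auto
  qed auto
  then have "sum g (set_mset P) = sum g (\<Union>i\<in>{..<Mx}. {A \<in> set_mset P. size A = Suc i})" by simp
  also have "\<dots> = (\<Sum>i<Mx. sum g {A \<in> set_mset P. size A = Suc i})"
    by (rule sum.UNION_disjoint) auto
  finally show ?thesis by (simp add: Mx_def)
qed

lemma sum_replicate_count: "(\<Sum>A\<in>set_mset P. replicate_mset (count P A) A) = P"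
proof (rule multiset_eqI)
  fix X
  have "count (\<Sum>A\<in>set_mset P. replicate_mset (count P A) A) X = (\<Sum>A\<in>set_mset P. if A = X then count P A else 0)"
    by (simp add: count_sum)
  also have "\<dots> = count P X" by (simp add: not_in_iff)
  finally show "count (\<Sum>A\<in>set_mset P. replicate_mset (count P A) A) X = count P X" .
qed

lemma mtilde_CL:
  assumes P: "P \<in> Iset n ks"
  shows "\<exists>CL :: (nat \<times> int \<times> nat multiset) list.
     Mtilde_comp n (mtype P) = map (\<lambda>t. (fst t, fst (snd t))) CL \<and> sum_list (map fst CL) = n \<and>
     (\<forall>t\<in>set CL. fst (snd t) = int (size (snd (snd t)))) \<and> distinct (map (\<lambda>t. snd (snd t)) CL) \<and>
     sum_list (map (\<lambda>t. replicate_mset (fst t) (snd (snd t))) CL) = P + replicate_mset (n - size P) {#}"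
proof -
  have eP: "{#} \<notin># P" and szP: "size P \<le> n" using P by (auto simp: Iset_def multiset_partitions_def)
  define Mx where "Mx = Max (insert 0 (size ` set_mset P))"
  define D where "D s = {A \<in> set_mset P. size A = s}" for s
  have finD: "finite (D s)" for s by (simp add: D_def)
  have lm: "mtype P = map (\<lambda>i. type_part P (Suc i)) [0..<Mx]"
    by (simp add: mtype_def Mx_def map_Suc_upt[symmetric] del: upt_Suc)
  have tp: "type_part P s = image_mset (count P) (mset_set (D s))" for s by (simp add: type_part_def D_def)
  have "\<exists>As. i < Mx \<longrightarrow> distinct As \<and> set As = D (Suc i) \<and>
      map (count P) As = rev (sorted_list_of_multiset (type_part P (Suc i)))" for i
  proof -
    obtain es where es: "distinct es" "set es = D (Suc i)" using finite_distinct_list[OF finD] by blast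
    have "mset (map (count P) es) = mset (rev (sorted_list_of_multiset (type_part P (Suc i))))"
      using es by (simp add: tp mset_map flip: mset_set_set)
    then obtain es' where es': "mset es' = mset es" "map (count P) es' = rev (sorted_list_of_multiset (type_part P (Suc i)))"
      using reorder by blast
    have "distinct es'" using es(1) mset_eq_imp_distinct_iff[OF es'(1)] by simp
    moreover have "set es' = D (Suc i)" using es(2) es'(1) by (metis set_mset_mset)
    ultimately show ?thesis using es' by blast
  qed
  then obtain As where As: "\<And>i. i < Mx \<Longrightarrow> distinct (As i) \<and> set (As i) = D (Suc i) \<and>
      map (count P) (As i) = rev (sorted_list_of_multiset (type_part P (Suc i)))"
    by metis
  define m' where "m' = sum_list (map sum_mset (mtype P))"
  have sumAs: "sum_list (map g (As i)) = sum g (D (Suc i))" if "i < Mx" for i and g :: "nat multiset \<Rightarrow> 'b::comm_monoid_add"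
    using As[OF that] by (simp add: sum_list_distinct_conv_sum_set)
  have m': "m' = size P"
  proof -
    have "m' = (\<Sum>i<Mx. sum_mset (type_part P (Suc i)))"
      by (simp add: m'_def lm interv_sum_list_conv_sum_set_nat atLeast0LessThan o_def)
    also have "\<dots> = (\<Sum>i<Mx. sum (count P) (D (Suc i)))" by (simp add: tp sum_unfold_sum_mset)
    also have "\<dots> = sum (count P) (set_mset P)" using sum_by_size[OF eP, of "count P"] by (simp add: Mx_def D_def)
    also have "\<dots> = size P" by (simp add: size_multiset_overloaded_eq)
    finally show ?thesis .
  qed
  define Z :: "(nat \<times> int \<times> nat multiset) list" where "Z = (if n - m' = 0 then [] else [(n - m', 0, {#})])"
  define G where "G i = map (\<lambda>A. (count P A, int (Suc i), A)) (As i)" for i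
  define CL where "CL = Z @ concat (map G [0..<Mx])"
  have lenm: "length (mtype P) = Mx" by (simp add: lm)
  have c1: "Mtilde_comp n (mtype P) = map (\<lambda>t. (fst t, fst (snd t))) CL"
  proof -
    have "map (\<lambda>r. (r, int (Suc i))) (rev (sorted_list_of_multiset (mtype P ! i))) = map (\<lambda>t. (fst t, fst (snd t))) (G i)"
      if "i \<in> set [0..<Mx]" for i
    proof -
      have i: "i < Mx" using that by simp
      have "rev (sorted_list_of_multiset (mtype P ! i)) = map (count P) (As i)" using As[OF i] i by (simp add: lm)
      then show ?thesis by (simp add: G_def)
    qed
    then have "concat (map (\<lambda>i. map (\<lambda>r. (r, int (Suc i))) (rev (sorted_list_of_multiset (mtype P ! i)))) [0..<Mx])
        = concat (map (\<lambda>i. map (\<lambda>t. (fst t, fst (snd t))) (G i)) [0..<Mx])"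
      by (intro arg_cong[of _ _ concat] map_cong refl) 
    then show ?thesis
      by (simp add: Mtilde_comp_def Let_def lenm m'_def[symmetric] CL_def Z_def map_concat o_def)
  qed
  have c2: "sum_list (map fst CL) = n"
  proof -
    have "sum_list (map fst (concat (map G [0..<Mx]))) = (\<Sum>i<Mx. sum_list (map fst (G i)))"
      by (simp add: map_concat sum_list_concat' interv_sum_list_conv_sum_set_nat atLeast0LessThan o_def)
    also have "\<dots> = (\<Sum>i<Mx. sum (count P) (D (Suc i)))"
      unfolding G_def by (intro sum.cong refl) (simp add: o_def sumAs)
    also have "\<dots> = size P" using sum_by_size[OF eP, of "count P"]
      by (simp add: Mx_def D_def size_multiset_overloaded_eq)
    finally show ?thesis using m' szP by (simp add: CL_def Z_def)
  qed
  have c3: "\<forall>t\<in>set CL. fst (snd t) = int (size (snd (snd t)))"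
    using As by (auto simp: CL_def Z_def G_def D_def)
  have dk: "distinct (concat (map As [0..<k])) \<and> (\<forall>A\<in>set (concat (map As [0..<k])). 0 < size A \<and> size A \<le> k)"
    if "k \<le> Mx" for k
    using that
  proof (induction k)
    case (Suc k)
    then have k: "k < Mx" by simp
    have sk: "\<forall>A\<in>set (As k). size A = Suc k" using As[OF k] by (simp add: D_def)
    show ?case using Suc k sk As[OF k] by (fastforce simp: distinct_append)
  qed simp
  have c4: "distinct (map (\<lambda>t. snd (snd t)) CL)"
  proof -
    have "map (\<lambda>t. snd (snd t)) (concat (map G [0..<Mx])) = concat (map As [0..<Mx])"
      by (simp add: G_def map_concat o_def)
    moreover have "{#} \<notin> set (concat (map As [0..<Mx]))" using dk[of Mx, OF order_refl] by (metis less_not_refl size_empty)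
    ultimately show ?thesis using dk[of Mx, OF order_refl] by (auto simp: CL_def Z_def)
  qed
  have c5: "sum_list (map (\<lambda>t. replicate_mset (fst t) (snd (snd t))) CL) = P + replicate_mset (n - size P) {#}"
  proof -
    have "sum_list (map (\<lambda>t. replicate_mset (fst t) (snd (snd t))) (concat (map G [0..<Mx])))
        = (\<Sum>i<Mx. sum_list (map (\<lambda>t. replicate_mset (fst t) (snd (snd t))) (G i)))"
      by (simp add: map_concat sum_list_concat' interv_sum_list_conv_sum_set_nat atLeast0LessThan o_def)
    also have "\<dots> = (\<Sum>i<Mx. sum (\<lambda>A. replicate_mset (count P A) A) (D (Suc i)))"
      unfolding G_def by (intro sum.cong refl) (simp add: o_def sumAs)
    also have "\<dots> = P" using sum_by_size[OF eP, of "\<lambda>A. replicate_mset (count P A) A"] sum_replicate_count[of P]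
      by (simp add: Mx_def D_def)
    finally show ?thesis using m' by (auto simp: CL_def Z_def)
  qed
  show ?thesis using c1 c2 c3 c4 c5 by blast
qed

lemma good_exists:
  assumes P: "P \<in> Iset n ks"
  shows "\<exists>c. good n ks P c"
proof -
  obtain CL :: "(nat \<times> int \<times> nat multiset) list" where
    c1: "Mtilde_comp n (mtype P) = map (\<lambda>t. (fst t, fst (snd t))) CL" and c2: "sum_list (map fst CL) = n"
    and c3: "\<forall>t\<in>set CL. fst (snd t) = int (size (snd (snd t)))" and c4: "distinct (map (\<lambda>t. snd (snd t)) CL)"
    and c5: "sum_list (map (\<lambda>t. replicate_mset (fst t) (snd (snd t))) CL) = P + replicate_mset (n - size P) {#}"
    using mtilde_CL[OF P] by blast
  note cg = comp_good[OF c1 c2 _ c4] c3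
  show ?thesis unfolding good_def using cg c5
    by (intro exI[of _ "\<lambda>i. snd (snd (CL ! col (map fst CL) i))"]) auto
qed



theorem corollary3p9:
  fixes n :: nat and ks :: "nat list"
  shows "rep_iso n
           (symtens_space n ks, tens_act n (sum_list ks))
           (dsum_space {P \<in> multiset_partitions (target_mset ks). size P \<le> n}
                       (\<lambda>P. Mtilde_space n (mtype P)),
            dsum_act (\<lambda>P. ind_act n))"
proof -
  define cc where "cc P = (SOME c. good n ks P c)" for P
  have "good n ks P (cc P)" if "P \<in> Iset n ks" for P
    unfolding cc_def using good_exists[OF that] by (rule someI_ex)
  then show ?thesis using generic_iso[of n ks cc] unfolding Iset_def by blast
qed

end
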